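(* Let $G, G_1,\dots,G_m$ and $H_1,\dots,H_n$ be abelian groups with tiles $A \subset B \subset C \subset G$, $T_i \subset B_i \subset G_i$ ($1\le i\le m$) and $U_i \subset C_i \subset H_i$ ($1\le i\le n$), and let $d$ be a positive integer. Suppose that $B_1\times\dots\times B_m\times B$ is $(T_1,\dots,T_m,A)$-tilable and that $C_1\times\dots\times C_n\times C^d$ is $(U_1,\dots,U_n,B^{\times d})$-tilable. Then $B_1\times\dots\times B_m\times C_1\times\dots\times C_n\times C^d$ is $(T_1,\dots,T_m,U_1,\dots,U_n,A^{\times d})$-tilable.
   Context: A tile in an abelian group is a non-empty subset. Given abelian groups $K_1,\dots,K_r$ and tiles $V_j\subset K_j$, let $\mathsf{V}_j \subset K_1\times\dots\times K_r$ be the set of points whose $j$-th coordinate lies in $V_j$ and whose other coordinates are $0$. A copy of $V_j$ is a translate $\mathsf{V}_j + x$ with $x \in K_1\times\dots\times K_r$. A subset of $K_1\times\dots\times K_r$ is $(V_1,\dots,V_r)$-tilable if it is a disjoint union of copies of $V_1,\dots,V_r$. The notation $V^{\times e}$ in such a list stands for $e$ consecutive entries $V,\dots,V$ (corresponding to $e$ consecutive factors). *)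

theory Defs
  imports Main
begin

text \<open>All abelian groups are realised as subgroups of one ambient abelian group type 'a.
  Points of K_1 x ... x K_r are lists of length r; the product of sets is listset.\<close>

definition ab_subgroup :: "'a::ab_group_add set \<Rightarrow> bool" where
  "ab_subgroup K \<longleftrightarrow> 0 \<in> K \<and> (\<forall>x\<in>K. \<forall>y\<in>K. x + y \<in> K) \<and> (\<forall>x\<in>K. - x \<in> K)"

definition is_tile :: "'a set \<Rightarrow> 'a set \<Rightarrow> bool" where
  "is_tile K V \<longleftrightarrow> V \<noteq> {} \<and> V \<subseteq> K"

definition embed_tile :: "nat \<Rightarrow> nat \<Rightarrow> 'a::zero set \<Rightarrow> 'a list set" where
  "embed_tile r j V = {xs. length xs = r \<and> xs ! j \<in> V \<and> (\<forall>i<r. i \<noteq> j \<longrightarrow> xs ! i = 0)}"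

definition tile_copy :: "nat \<Rightarrow> nat \<Rightarrow> 'a::ab_group_add set \<Rightarrow> 'a list \<Rightarrow> 'a list set" where
  "tile_copy r j V x = (\<lambda>v. map2 (+) v x) ` embed_tile r j V"

definition tilable :: "'a::ab_group_add set list \<Rightarrow> 'a set list \<Rightarrow> 'a list set \<Rightarrow> bool" where
  "tilable Ks Vs S \<longleftrightarrow> length Vs = length Ks \<and>
     (\<exists>\<C>. (\<forall>c\<in>\<C>. \<exists>j<length Ks. \<exists>x\<in>listset Ks. c = tile_copy (length Ks) j (Vs ! j) x)
         \<and> pairwise disjnt \<C> \<and> \<Union>\<C> = S)"

end

theory Submission imports Defs begin


lemma in_listset_iff0: "xs \<in> listset As \<longleftrightarrow> list_all2 (\<in>) xs As"
proof (induction As arbitrary: xs)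
  case Nil then show ?case by simp
next
  case (Cons A As)
  then show ?case by (auto simp: set_Cons_def list_all2_Cons2)
qed

lemma in_listset_iff:
  "xs \<in> listset As \<longleftrightarrow> length xs = length As \<and> (\<forall>i<length As. xs ! i \<in> As ! i)"
  by (auto simp: in_listset_iff0 list_all2_conv_all_nth)

lemma in_tile_copy_iff:
  assumes "length x = r" "j < r"
  shows "y \<in> tile_copy r j V x \<longleftrightarrow> length y = r \<and> y ! j - x ! j \<in> V \<and> (\<forall>i<r. i \<noteq> j \<longrightarrow> y ! i = x ! i)"
proof
  assume "y \<in> tile_copy r j V x"
  then obtain v where v: "v \<in> embed_tile r j V" "y = map2 (+) v x" unfolding tile_copy_def by auto
  then show "length y = r \<and> y ! j - x ! j \<in> V \<and> (\<forall>i<r. i \<noteq> j \<longrightarrow> y ! i = x ! i)"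
    using assms by (auto simp: embed_tile_def)
next
  assume h: "length y = r \<and> y ! j - x ! j \<in> V \<and> (\<forall>i<r. i \<noteq> j \<longrightarrow> y ! i = x ! i)"
  define v where "v = map2 (-) y x"
  have "v \<in> embed_tile r j V" using h assms by (auto simp: embed_tile_def v_def)
  moreover have "y = map2 (+) v x" using h assms
    by (intro nth_equalityI) (auto simp: v_def)
  ultimately show "y \<in> tile_copy r j V x" unfolding tile_copy_def by auto
qed



lemma tilable_single:
  assumes "length Vs = length Ks" "j < length Ks" "x \<in> listset Ks"
  shows "tilable Ks Vs (tile_copy (length Ks) j (Vs ! j) x)"
  unfolding tilable_def using assms
  by (intro conjI exI[of _ "{tile_copy (length Ks) j (Vs ! j) x}"]) (auto simp: pairwise_def)

lemma tilable_UN: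
  assumes "length Vs = length Ks"
    and "\<forall>a\<in>I. \<forall>b\<in>I. a \<noteq> b \<longrightarrow> disjnt (f a) (f b)"
    and "\<forall>a\<in>I. tilable Ks Vs (f a)"
  shows "tilable Ks Vs (\<Union>a\<in>I. f a)"
proof -
  have "\<forall>a\<in>I. \<exists>\<C>. (\<forall>c\<in>\<C>. \<exists>j<length Ks. \<exists>x\<in>listset Ks. c = tile_copy (length Ks) j (Vs ! j) x)
         \<and> pairwise disjnt \<C> \<and> \<Union>\<C> = f a"
    using assms(3) unfolding tilable_def by blast
  then obtain F where F: "\<forall>a\<in>I. (\<forall>c\<in>F a. \<exists>j<length Ks. \<exists>x\<in>listset Ks. c = tile_copy (length Ks) j (Vs ! j) x)
         \<and> pairwise disjnt (F a) \<and> \<Union>(F a) = f a"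
    by (rule bchoice[elim_format]) blast
  have pw: "pairwise disjnt (\<Union>a\<in>I. F a)"
  proof (rule pairwiseI)
    fix c1 c2 assume c: "c1 \<in> (\<Union>a\<in>I. F a)" "c2 \<in> (\<Union>a\<in>I. F a)" "c1 \<noteq> c2"
    then obtain a b where ab: "a \<in> I" "b \<in> I" "c1 \<in> F a" "c2 \<in> F b" by blast
    show "disjnt c1 c2"
    proof (cases "a = b")
      case True then show ?thesis using F ab c by (auto simp: pairwise_def)
    next
      case False
      then have "disjnt (f a) (f b)" using assms(2) ab by blast
      moreover have "c1 \<subseteq> f a" "c2 \<subseteq> f b" using F ab by auto
      ultimately show ?thesis by (auto simp: disjnt_def)
    qed
  qed
  have U0: "\<forall>a\<in>I. \<Union>(F a) = f a" using F by blast
  have U: "\<Union>(\<Union>a\<in>I. F a) = (\<Union>a\<in>I. f a)"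
  proof -
    have "\<Union>(\<Union>a\<in>I. F a) = (\<Union>a\<in>I. \<Union>(F a))" by blast
    also have "\<dots> = (\<Union>a\<in>I. f a)" using U0 by simp
    finally show ?thesis .
  qed
  show ?thesis unfolding tilable_def using assms(1) F pw U
    by (intro conjI exI[of _ "\<Union>a\<in>I. F a"]) auto
qed

lemma tilable_image:
  assumes "tilable Ks Vs S" "inj_on \<phi> S" "length Vs' = length Ks'"
    and "\<And>j x. j < length Ks \<Longrightarrow> x \<in> listset Ks \<Longrightarrow> tile_copy (length Ks) j (Vs ! j) x \<subseteq> S \<Longrightarrow>
          \<exists>j'<length Ks'. \<exists>x'\<in>listset Ks'. \<phi> ` tile_copy (length Ks) j (Vs ! j) x = tile_copy (length Ks') j' (Vs' ! j') x'"
  shows "tilable Ks' Vs' (\<phi> ` S)"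
proof -
  obtain \<C> where C: "\<forall>c\<in>\<C>. \<exists>j<length Ks. \<exists>x\<in>listset Ks. c = tile_copy (length Ks) j (Vs ! j) x"
    "pairwise disjnt \<C>" "\<Union>\<C> = S" using assms(1) unfolding tilable_def by blast
  have 1: "\<forall>c'\<in>(`) \<phi> ` \<C>. \<exists>j<length Ks'. \<exists>x\<in>listset Ks'. c' = tile_copy (length Ks') j (Vs' ! j) x"
  proof
    fix c' assume "c' \<in> (`) \<phi> ` \<C>"
    then obtain c where c: "c \<in> \<C>" "c' = \<phi> ` c" by blast
    then obtain j x where "j<length Ks" "x\<in>listset Ks" "c = tile_copy (length Ks) j (Vs ! j) x"
      using C(1) by blast
    moreover have "c \<subseteq> S" using c C(3) by blast
    ultimately show "\<exists>j<length Ks'. \<exists>x\<in>listset Ks'. c' = tile_copy (length Ks') j (Vs' ! j) x"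
      using assms(4) c by metis
  qed
  have 2: "pairwise disjnt ((`) \<phi> ` \<C>)"
  proof (rule pairwiseI)
    fix a b assume ab: "a \<in> (`) \<phi> ` \<C>" "b \<in> (`) \<phi> ` \<C>" "a \<noteq> b"
    then obtain c1 c2 where c: "c1 \<in> \<C>" "c2 \<in> \<C>" "a = \<phi> ` c1" "b = \<phi> ` c2" by blast
    then have "c1 \<noteq> c2" using ab by blast
    then have "disjnt c1 c2" using C(2) c by (auto simp: pairwise_def)
    moreover have "c1 \<subseteq> S" "c2 \<subseteq> S" using c C(3) by auto
    ultimately show "disjnt a b" using assms(2) c unfolding disjnt_def inj_on_def by blast
  qed
  show ?thesis unfolding tilable_def using assms(3) 1 2 C(3)
    by (intro conjI exI[of _ "(`) \<phi> ` \<C>"]) auto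
qed

lemma image_by_inverse:
  assumes "\<forall>y\<in>P. \<phi> y \<in> D \<and> \<psi> (\<phi> y) = y" "\<forall>w\<in>D. \<phi> (\<psi> w) = w"
  shows "\<phi> ` P = {w\<in>D. \<psi> w \<in> P}"
  using assms by force



lemma all_less_add_split:
  "(\<forall>i<(m::nat)+k. P i) \<longleftrightarrow> (\<forall>i<m. P i) \<and> (\<forall>i<k. P (m+i))"
proof safe
  fix i assume h: "\<forall>i<m. P i" "\<forall>i<k. P (m+i)" and i: "i < m + k"
  show "P i"
  proof (cases "i < m")
    case True then show ?thesis using h by simp
  next
    case False
    then have "i - m < k" "i = m + (i - m)" using i by auto
    then show ?thesis using h(2) by metis
  qed
qed auto

lemma listset_append_iff:
  "zs \<in> listset (Xs @ Ys) \<longleftrightarrow> take (length Xs) zs \<in> listset Xs \<and> drop (length Xs) zs \<in> listset Ys"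
  unfolding in_listset_iff
  by (auto simp: nth_append all_less_add_split)

lemma append_in_listset:
  "xs \<in> listset Xs \<Longrightarrow> ys \<in> listset Ys \<Longrightarrow> xs @ ys \<in> listset (Xs @ Ys)"
  by (auto simp: in_listset_iff nth_append)

lemma listset_mono:
  assumes "length Xs = length Ys" "\<forall>i<length Xs. Xs ! i \<subseteq> Ys ! i" "xs \<in> listset Xs"
  shows "xs \<in> listset Ys"
  using assms by (auto simp: in_listset_iff)



lemma take_eq_iff_nth:
  assumes "length p = m" "m \<le> length w"
  shows "take m w = p \<longleftrightarrow> (\<forall>i<m. w ! i = p ! i)"
  using assms by (auto simp: list_eq_iff_nth_eq)

lemma prefix_copy:
  fixes x :: "'a::ab_group_add list"
  assumes "length p = m" "length x = r" "j < r"
  shows "(@) p ` tile_copy r j V x = tile_copy (m + r) (m + j) V (p @ x)"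
proof -
  let ?D = "{w. length w = m + r \<and> take m w = p}"
  have "(@) p ` tile_copy r j V x = {w\<in>?D. drop m w \<in> tile_copy r j V x}"
  proof (rule image_by_inverse)
    show "\<forall>y\<in>tile_copy r j V x. p @ y \<in> ?D \<and> drop m (p @ y) = y"
      using assms by (auto simp: in_tile_copy_iff)
    show "\<forall>w\<in>?D. p @ drop m w = w" by (metis (mono_tags, lifting) append_take_drop_id mem_Collect_eq)
  qed
  also have "\<dots> = tile_copy (m + r) (m + j) V (p @ x)"
  proof (intro set_eqI iffI)
    fix w assume "w \<in> {w\<in>?D. drop m w \<in> tile_copy r j V x}"
    then have w: "length w = m + r" "take m w = p" "drop m w \<in> tile_copy r j V x" by auto
    have "\<forall>i<m. w ! i = p ! i" using w assms take_eq_iff_nth[of p m w] by auto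
    then show "w \<in> tile_copy (m + r) (m + j) V (p @ x)"
      using w assms by (auto simp: in_tile_copy_iff nth_append all_less_add_split)
  next
    fix w assume w: "w \<in> tile_copy (m + r) (m + j) V (p @ x)"
    then have w1: "length w = m + r" "w ! (m+j) - x ! j \<in> V"
      "\<forall>i<m. w ! i = p ! i" "\<forall>i<r. i \<noteq> j \<longrightarrow> w ! (m+i) = x ! i"
      using assms by (auto simp: in_tile_copy_iff nth_append all_less_add_split)
    then have "take m w = p" using assms take_eq_iff_nth[of p m w] by auto
    moreover have "drop m w \<in> tile_copy r j V x"
      using w1 assms by (auto simp: in_tile_copy_iff)
    ultimately show "w \<in> {w\<in>?D. drop m w \<in> tile_copy r j V x}" using w1 by auto
  qed
  finally show ?thesis .
qed



lemma bcase:
  fixes x :: "'a::ab_group_add list" and G :: "'a set"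
  assumes len: "length Gs = m" "length Ts = m" "length Bs = m"
    "length Ks2 = r" "length Vs2 = r" "q < r" "Ks2 ! q = G" "Vs2 ! q = A"
    and xin: "x \<in> listset Ks2" and sg: "ab_subgroup G"
    and til: "tilable (Gs @ [G]) (Ts @ [A]) (listset (Bs @ [B]))"
  shows "tilable (Gs @ Ks2) (Ts @ Vs2)
     {zs. length zs = m + r \<and> take m zs \<in> listset Bs \<and> drop m zs \<in> tile_copy r q B x}"
proof -
  have lx: "length x = r" using xin len by (simp add: in_listset_iff)
  define \<phi> where "\<phi> y = take m y @ x[q := x ! q + y ! m]" for y :: "'a list"
  define \<psi> where "\<psi> w = take m w @ [w ! (m + q) - x ! q]" for w :: "'a list"
  define D where "D = {w :: 'a list. length w = m + r \<and> (\<forall>i<r. i \<noteq> q \<longrightarrow> w ! (m + i) = x ! i)}"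
  have phi_nth: "\<phi> y ! i = (if i < m then y ! i else if i = m + q then x ! q + y ! m else x ! (i - m))"
    if "length y = m + 1" "i < m + r" for y i
    using that lx len by (auto simp: \<phi>_def nth_append nth_list_update)
  have psi_nth: "\<psi> w ! i = (if i < m then w ! i else w ! (m + q) - x ! q)"
    if "length w = m + r" "i < m + 1" for w i
    using that lx len by (auto simp: \<psi>_def nth_append)
  have lphi: "length (\<phi> y) = m + r" if "length y = m + 1" for y
    using that lx by (simp add: \<phi>_def)
  have lpsi: "length (\<psi> w) = m + 1" if "length w = m + r" for w
    using that by (simp add: \<psi>_def)
  have F1: "\<phi> y \<in> D \<and> \<psi> (\<phi> y) = y" if "length y = m + 1" for y
  proof
    show "\<phi> y \<in> D" using that lphi phi_nth len by (auto simp: D_def)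
    show "\<psi> (\<phi> y) = y"
    proof (intro nth_equalityI)
      show "length (\<psi> (\<phi> y)) = length y" using that lphi lpsi by simp
      fix i assume "i < length (\<psi> (\<phi> y))"
      then have i: "i < m + 1" using that lphi lpsi by simp
      show "\<psi> (\<phi> y) ! i = y ! i"
      proof (cases "i < m")
        case True then show ?thesis using that i lphi psi_nth phi_nth by simp
      next
        case False
        then have "i = m" using i by simp
        then show ?thesis using that i lphi psi_nth phi_nth len by simp
      qed
    qed
  qed
  have F2: "\<phi> (\<psi> w) = w" if "w \<in> D" for w
  proof -
    have lw: "length w = m + r" using that by (simp add: D_def)
    show ?thesis
    proof (intro nth_equalityI)
      show "length (\<phi> (\<psi> w)) = length w" using lw lpsi lphi by simp
      fix i assume "i < length (\<phi> (\<psi> w))"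
      then have i: "i < m + r" using lw lpsi lphi by simp
      show "\<phi> (\<psi> w) ! i = w ! i"
      proof (cases "i < m")
        case True then show ?thesis using i lw lpsi phi_nth psi_nth by simp
      next
        case False
        then obtain i' where i': "i = m + i'" "i' < r" using i by (metis add_diff_inverse_nat nat_add_left_cancel_less)
        then show ?thesis using i lw lpsi phi_nth psi_nth that len by (auto simp: D_def)
      qed
    qed
  qed
  have lenS: "\<forall>y\<in>listset (Bs @ [B]). length y = m + 1" using len by (simp add: in_listset_iff)
  have S_eq: "\<phi> ` listset (Bs @ [B]) = {w\<in>D. \<psi> w \<in> listset (Bs @ [B])}"
    using lenS F1 F2 by (intro image_by_inverse) auto
  have T_eq: "{w\<in>D. \<psi> w \<in> listset (Bs @ [B])} =
     {zs. length zs = m + r \<and> take m zs \<in> listset Bs \<and> drop m zs \<in> tile_copy r q B x}"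
  proof (intro set_eqI iffI)
    fix w assume "w \<in> {w\<in>D. \<psi> w \<in> listset (Bs @ [B])}"
    then have w: "w \<in> D" "\<psi> w \<in> listset (Bs @ [B])" by auto
    have lw: "length w = m + r" using w by (simp add: D_def)
    have "take m w \<in> listset Bs" "w ! (m + q) - x ! q \<in> B"
      using w(2) lw len by (auto simp: listset_append_iff \<psi>_def set_Cons_def)
    then show "w \<in> {zs. length zs = m + r \<and> take m zs \<in> listset Bs \<and> drop m zs \<in> tile_copy r q B x}"
      using w(1) lw lx len by (auto simp: D_def in_tile_copy_iff)
  next
    fix w assume "w \<in> {zs. length zs = m + r \<and> take m zs \<in> listset Bs \<and> drop m zs \<in> tile_copy r q B x}"
    then have w: "length w = m + r" "take m w \<in> listset Bs" "drop m w \<in> tile_copy r q B x" by auto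
    have "w ! (m + q) - x ! q \<in> B" "\<forall>i<r. i \<noteq> q \<longrightarrow> w ! (m + i) = x ! i"
      using w(1,3) lx len by (auto simp: in_tile_copy_iff)
    then show "w \<in> {w\<in>D. \<psi> w \<in> listset (Bs @ [B])}"
      using w len by (auto simp: D_def listset_append_iff \<psi>_def set_Cons_def)
  qed
  show ?thesis
    unfolding T_eq[symmetric] S_eq[symmetric]
  proof (rule tilable_image[OF til])
    show "inj_on \<phi> (listset (Bs @ [B]))"
      using lenS F1 by (metis inj_on_inverseI)
    show "length (Ts @ Vs2) = length (Gs @ Ks2)" using len by simp
    fix j z assume j: "j < length (Gs @ [G])" and z: "z \<in> listset (Gs @ [G])"
    have lz: "length z = m + 1" using z len by (simp add: in_listset_iff)
    define j'' where "j'' = (if j < m then j else m + q)"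
    have j'': "j'' < length (Gs @ Ks2)" using len by (simp add: j''_def)
    have V: "(Ts @ Vs2) ! j'' = (Ts @ [A]) ! j" using j len by (auto simp: j''_def nth_append)
    have zG: "z ! i \<in> (Gs @ [G]) ! i" if "i < m + 1" for i using z that len by (simp add: in_listset_iff)
    have phiK: "\<phi> z \<in> listset (Gs @ Ks2)"
    proof -
      have "\<phi> z ! i \<in> (Gs @ Ks2) ! i" if i: "i < m + r" for i
      proof (cases "i < m")
        case True then show ?thesis using zG[of i] phi_nth[OF lz i] len by (simp add: nth_append)
      next
        case False
        then obtain i' where i': "i = m + i'" "i' < r" using i by (metis add_diff_inverse_nat nat_add_left_cancel_less)
        have xi: "x ! i' \<in> Ks2 ! i'" using xin i' len by (simp add: in_listset_iff)
        show ?thesis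
        proof (cases "i' = q")
          case True
          have "z ! m \<in> G" using zG[of m] len(1) nth_append_length[of Gs G] by simp
          moreover have "x ! q \<in> G" using xi True len by simp
          ultimately have "x ! q + z ! m \<in> G" using sg by (simp add: ab_subgroup_def)
          then show ?thesis using phi_nth[OF lz i] i' True len by (simp add: nth_append)
        next
          case False
          then show ?thesis using phi_nth[OF lz i] i' xi len by (simp add: nth_append)
        qed
      qed
      then show ?thesis using lphi[OF lz] len by (simp add: in_listset_iff)
    qed
    have lenC: "\<forall>y\<in>tile_copy (length (Gs @ [G])) j ((Ts @ [A]) ! j) z. length y = m + 1"
      using lz len j by (simp add: in_tile_copy_iff)
    have "\<phi> ` tile_copy (length (Gs @ [G])) j ((Ts @ [A]) ! j) z =
        {w\<in>D. \<psi> w \<in> tile_copy (length (Gs @ [G])) j ((Ts @ [A]) ! j) z}"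
      using lenC F1 F2 by (intro image_by_inverse) auto
    also have "\<dots> = tile_copy (length (Gs @ Ks2)) j'' ((Ts @ Vs2) ! j'') (\<phi> z)"
    proof -
      let ?V = "(Ts @ [A]) ! j"
      have l1: "length (Gs @ [G]) = m + 1" "length (Gs @ Ks2) = m + r" using len by auto
      have pz: "\<And>i. i < m + r \<Longrightarrow> \<phi> z ! i = (if i < m then z ! i else if i = m + q then x ! q + z ! m else x ! (i - m))"
        using phi_nth[OF lz] .
      have jj: "j < m + 1" using j len by simp
      show ?thesis
      proof (cases "j < m")
        case True
        then have jd: "j'' = j" by (simp add: j''_def)
        show ?thesis unfolding V unfolding jd l1
        proof (intro set_eqI iffI)
          fix w assume "w \<in> {w \<in> D. \<psi> w \<in> tile_copy (m + 1) j ?V z}"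
          then have w: "length w = m + r" "\<forall>i<r. i \<noteq> q \<longrightarrow> w ! (m + i) = x ! i"
             "\<psi> w \<in> tile_copy (m + 1) j ?V z" by (auto simp: D_def)
          then have a: "\<psi> w ! j - z ! j \<in> ?V" "\<forall>i<m+1. i \<noteq> j \<longrightarrow> \<psi> w ! i = z ! i"
            using lz jj by (auto simp: in_tile_copy_iff)
          have w2: "w ! j - z ! j \<in> ?V" "\<forall>i<m. i \<noteq> j \<longrightarrow> w ! i = z ! i"
             "w ! (m + q) - x ! q = z ! m"
          proof -
            show "w ! j - z ! j \<in> ?V" using a(1) psi_nth[OF w(1), of j] True by simp
            show "\<forall>i<m. i \<noteq> j \<longrightarrow> w ! i = z ! i"
            proof (intro allI impI)
              fix i assume "i < m" "i \<noteq> j"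
              then show "w ! i = z ! i" using a(2)[rule_format, of i] psi_nth[OF w(1), of i] by simp
            qed
            show "w ! (m + q) - x ! q = z ! m" using a(2)[rule_format, of m] psi_nth[OF w(1), of m] True by simp
          qed
          have w4: "w ! (m + q) = x ! q + z ! m" using w2(3) by (metis add.commute diff_eq_eq)
          show "w \<in> tile_copy (m + r) j ?V (\<phi> z)"
            using w w2 w4 True lphi[OF lz] pz len
            by (auto simp: in_tile_copy_iff all_less_add_split)
        next
          fix w assume w0: "w \<in> tile_copy (m + r) j ?V (\<phi> z)"
          then have lw: "length w = m + r" using lphi[OF lz] True by (simp add: in_tile_copy_iff)
          have w: "w ! j - z ! j \<in> ?V" "\<forall>i<m. i \<noteq> j \<longrightarrow> w ! i = z ! i"
            "\<forall>i<r. w ! (m + i) = \<phi> z ! (m + i)"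
            using w0 True lphi[OF lz] pz by (auto simp: in_tile_copy_iff all_less_add_split)
          have w3: "\<forall>i<r. i \<noteq> q \<longrightarrow> w ! (m + i) = x ! i" "w ! (m + q) = x ! q + z ! m"
            using w(3) pz len by auto
          have b: "\<forall>i<m+1. i \<noteq> j \<longrightarrow> \<psi> w ! i = z ! i"
          proof (intro allI impI)
            fix i assume i: "i < m + 1" "i \<noteq> j"
            show "\<psi> w ! i = z ! i"
            proof (cases "i < m")
              case True then show ?thesis using i w psi_nth[OF lw i(1)] by simp
            next
              case False then have "i = m" using i by simp
              then show ?thesis using psi_nth[OF lw i(1)] w3 by simp
            qed
          qed
          have "\<psi> w \<in> tile_copy (m + 1) j ?V z"
            using b w(1) psi_nth[OF lw, of j] jj True lz lpsi[OF lw] by (simp add: in_tile_copy_iff)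
          then show "w \<in> {w \<in> D. \<psi> w \<in> tile_copy (m + 1) j ?V z}"
            using lw w3 by (auto simp: D_def)
        qed
      next
        case False
        then have jm: "j = m" using jj by simp
        then have jd: "j'' = m + q" by (simp add: j''_def)
        show ?thesis unfolding V unfolding jd l1
        proof (intro set_eqI iffI)
          fix w assume "w \<in> {w \<in> D. \<psi> w \<in> tile_copy (m + 1) j ?V z}"
          then have w: "length w = m + r" "\<forall>i<r. i \<noteq> q \<longrightarrow> w ! (m + i) = x ! i"
             "\<psi> w \<in> tile_copy (m + 1) j ?V z" by (auto simp: D_def)
          then have w2: "w ! (m + q) - x ! q - z ! m \<in> ?V" "\<forall>i<m. w ! i = z ! i"
            using lz jm psi_nth[OF w(1)] by (auto simp: in_tile_copy_iff all_less_add_split)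
          have e: "w ! (m + q) - (x ! q + z ! m) = w ! (m + q) - x ! q - z ! m" by (simp add: algebra_simps)
          have w5: "w ! (m + q) - (x ! q + z ! m) \<in> ?V" using w2(1) e by metis
          show "w \<in> tile_copy (m + r) (m + q) ?V (\<phi> z)"
            using w w2(2) w5 lphi[OF lz] pz len
            by (auto simp: in_tile_copy_iff all_less_add_split)
        next
          fix w assume w0: "w \<in> tile_copy (m + r) (m + q) ?V (\<phi> z)"
          then have lw: "length w = m + r" using lphi[OF lz] len by (simp add: in_tile_copy_iff)
          have w: "w ! (m + q) - \<phi> z ! (m + q) \<in> ?V" "\<forall>i<m. w ! i = z ! i"
            "\<forall>i<r. i \<noteq> q \<longrightarrow> w ! (m + i) = \<phi> z ! (m + i)"
            using w0 lphi[OF lz] pz len by (auto simp: in_tile_copy_iff all_less_add_split)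
          have w3: "\<forall>i<r. i \<noteq> q \<longrightarrow> w ! (m + i) = x ! i" "w ! (m + q) - x ! q - z ! m \<in> ?V"
            using w pz len by (auto simp: algebra_simps)
          have b: "\<forall>i<m+1. i \<noteq> j \<longrightarrow> \<psi> w ! i = z ! i"
          proof (intro allI impI)
            fix i assume i: "i < m + 1" "i \<noteq> j"
            then have "i < m" using jm by simp
            then show "\<psi> w ! i = z ! i" using i w psi_nth[OF lw i(1)] by simp
          qed
          have "\<psi> w ! j - z ! j \<in> ?V" using psi_nth[OF lw, of j] jm w3(2) by simp
          then have "\<psi> w \<in> tile_copy (m + 1) j ?V z"
            using b jj lz lpsi[OF lw] by (simp add: in_tile_copy_iff)
          then show "w \<in> {w \<in> D. \<psi> w \<in> tile_copy (m + 1) j ?V z}"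
            using lw w3 by (auto simp: D_def)
        qed
      qed
    qed
    finally show "\<exists>j'<length (Gs @ Ks2). \<exists>x'\<in>listset (Gs @ Ks2).
        \<phi> ` tile_copy (length (Gs @ [G])) j ((Ts @ [A]) ! j) z = tile_copy (length (Gs @ Ks2)) j' ((Ts @ Vs2) ! j') x'"
      using j'' phiK by blast
  qed
qed



theorem proposition15:
  fixes G :: "'a::ab_group_add set"
    and A B C :: "'a set"
    and Gs Ts Bs :: "'a set list"
    and Hs Us Cs :: "'a set list"
    and d :: nat
  assumes "ab_subgroup G"
    and "\<forall>K\<in>set Gs. ab_subgroup K"
    and "\<forall>K\<in>set Hs. ab_subgroup K"
    and "length Ts = length Gs" and "length Bs = length Gs"
    and "length Us = length Hs" and "length Cs = length Hs"
    and "is_tile G A" and "is_tile G B" and "is_tile G C"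
    and "A \<subseteq> B" and "B \<subseteq> C"
    and "\<forall>i<length Gs. is_tile (Gs ! i) (Ts ! i) \<and> is_tile (Gs ! i) (Bs ! i) \<and> Ts ! i \<subseteq> Bs ! i"
    and "\<forall>i<length Hs. is_tile (Hs ! i) (Us ! i) \<and> is_tile (Hs ! i) (Cs ! i) \<and> Us ! i \<subseteq> Cs ! i"
    and "d > 0"
    and "tilable (Gs @ [G]) (Ts @ [A]) (listset (Bs @ [B]))"
    and "tilable (Hs @ replicate d G) (Us @ replicate d B) (listset (Cs @ replicate d C))"
  shows "tilable (Gs @ Hs @ replicate d G) (Ts @ Us @ replicate d A)
           (listset (Bs @ Cs @ replicate d C))"
proof -
  define m where "m = length Gs"
  define n where "n = length Hs"
  note len = assms(4,5,6,7)
  obtain \<C> where C: "\<forall>c\<in>\<C>. \<exists>j<n + d. \<exists>x\<in>listset (Hs @ replicate d G).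
        c = tile_copy (n + d) j ((Us @ replicate d B) ! j) x"
    "pairwise disjnt \<C>" "\<Union>\<C> = listset (Cs @ replicate d C)"
    using assms(17) unfolding tilable_def n_def by auto
  define Q where "Q c = {zs. length zs = m + (n + d) \<and> take m zs \<in> listset Bs \<and> drop m zs \<in> c}" for c
  have lKK: "length (Gs @ Hs @ replicate d G) = m + (n + d)" by (simp add: m_def n_def)
  have eq: "listset (Bs @ Cs @ replicate d C) = (\<Union>c\<in>\<C>. Q c)"
  proof (intro set_eqI iffI)
    fix w assume "w \<in> listset (Bs @ Cs @ replicate d C)"
    then have "take m w \<in> listset Bs" "drop m w \<in> listset (Cs @ replicate d C)"
      using len by (simp_all add: listset_append_iff[of w Bs] m_def)
    moreover have "length w = m + (n + d)"
      using \<open>w \<in> listset (Bs @ Cs @ replicate d C)\<close> len by (simp add: in_listset_iff m_def n_def)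
    ultimately show "w \<in> (\<Union>c\<in>\<C>. Q c)" using C(3) by (auto simp: Q_def)
  next
    fix w assume "w \<in> (\<Union>c\<in>\<C>. Q c)"
    then have "take m w \<in> listset Bs" "drop m w \<in> listset (Cs @ replicate d C)"
      using C(3) by (auto simp: Q_def)
    then show "w \<in> listset (Bs @ Cs @ replicate d C)"
      using len by (simp add: listset_append_iff m_def)
  qed
  have Gsub: "\<forall>i<length Bs. Bs ! i \<subseteq> Gs ! i" using assms(13) len by (auto simp: is_tile_def)
  show ?thesis unfolding eq
  proof (rule tilable_UN)
    show "length (Ts @ Us @ replicate d A) = length (Gs @ Hs @ replicate d G)" using len by simp
    show "\<forall>a\<in>\<C>. \<forall>b\<in>\<C>. a \<noteq> b \<longrightarrow> disjnt (Q a) (Q b)"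
      using C(2) unfolding pairwise_def disjnt_def Q_def by blast
    show "\<forall>c\<in>\<C>. tilable (Gs @ Hs @ replicate d G) (Ts @ Us @ replicate d A) (Q c)"
    proof
      fix c assume "c \<in> \<C>"
      then obtain j x where jx: "j < n + d" "x \<in> listset (Hs @ replicate d G)"
        "c = tile_copy (n + d) j ((Us @ replicate d B) ! j) x" using C(1) by blast
      have lx: "length x = n + d" using jx(2) by (simp add: in_listset_iff n_def)
      show "tilable (Gs @ Hs @ replicate d G) (Ts @ Us @ replicate d A) (Q c)"
      proof (cases "j < n")
        case True
        have V: "(Us @ replicate d B) ! j = Us ! j" using True len by (simp add: nth_append n_def)
        have V2: "(Ts @ Us @ replicate d A) ! (m + j) = Us ! j" using True len by (simp add: nth_append n_def m_def)
        have lc: "\<forall>y\<in>c. length y = n + d" using jx lx by (simp add: in_tile_copy_iff)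
        have Qe: "Q c = (\<Union>p\<in>listset Bs. (@) p ` c)"
        proof (intro set_eqI iffI)
          fix w assume "w \<in> Q c"
          then have "take m w \<in> listset Bs" "drop m w \<in> c" "w = take m w @ drop m w" by (auto simp: Q_def)
          then show "w \<in> (\<Union>p\<in>listset Bs. (@) p ` c)" by blast
        next
          fix w assume "w \<in> (\<Union>p\<in>listset Bs. (@) p ` c)"
          then obtain p y where "p \<in> listset Bs" "y \<in> c" "w = p @ y" by blast
          moreover have "length p = m" using \<open>p \<in> listset Bs\<close> len by (simp add: in_listset_iff m_def)
          ultimately show "w \<in> Q c" using lc by (auto simp: Q_def)
        qed
        show ?thesis unfolding Qe
        proof (rule tilable_UN)
          show "length (Ts @ Us @ replicate d A) = length (Gs @ Hs @ replicate d G)" using len by simp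
          show "\<forall>a\<in>listset Bs. \<forall>b\<in>listset Bs. a \<noteq> b \<longrightarrow> disjnt ((@) a ` c) ((@) b ` c)"
            by (auto simp: disjnt_def in_listset_iff)
          show "\<forall>p\<in>listset Bs. tilable (Gs @ Hs @ replicate d G) (Ts @ Us @ replicate d A) ((@) p ` c)"
          proof
            fix p assume p: "p \<in> listset Bs"
            have lp: "length p = m" using p len by (simp add: in_listset_iff m_def)
            have "(@) p ` c = tile_copy (m + (n + d)) (m + j) (Us ! j) (p @ x)"
              unfolding jx(3) V using prefix_copy[OF lp lx jx(1)] .
            also have "\<dots> = tile_copy (length (Gs @ Hs @ replicate d G)) (m + j)
                ((Ts @ Us @ replicate d A) ! (m + j)) (p @ x)" using V2 by (simp add: m_def n_def)
            finally have e: "(@) p ` c = \<dots>" .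
            have "p \<in> listset Gs" using listset_mono[OF len(2) Gsub p] len by simp
            then have px: "p @ x \<in> listset (Gs @ Hs @ replicate d G)"
              using append_in_listset jx(2) by blast
            show "tilable (Gs @ Hs @ replicate d G) (Ts @ Us @ replicate d A) ((@) p ` c)"
              unfolding e
              by (rule tilable_single) (use len lKK jx(1) px in auto)
          qed
        qed
      next
        case False
        then obtain k where k: "j = n + k" "k < d" using jx(1)
          by (metis add_diff_inverse_nat nat_add_left_cancel_less)
        have V: "(Us @ replicate d B) ! (n + k) = B" using k len by (simp add: nth_append n_def)
        have "tilable (Gs @ (Hs @ replicate d G)) (Ts @ (Us @ replicate d A))
           {zs. length zs = m + (n + d) \<and> take m zs \<in> listset Bs \<and> drop m zs \<in> tile_copy (n + d) (n + k) B x}"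
          by (rule bcase[where A = A and G = G]) 
             (use len k jx(2) assms(1,16) in \<open>auto simp: m_def n_def nth_append\<close>)
        then show ?thesis unfolding Q_def jx(3) V k(1) by simp
      qed
    qed
  qed
qed


end
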